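(* Let $\mathcal P\subset\mathbb R^d$ be compact, $\{p_i\}_{i=1}^K\subset\mathcal P$ anchors with fill distance $h_K:=\sup_{p\in\mathcal P}\min_i\|p-p_i\|$, and $i(p)\in\arg\min_i\|p-p_i\|$. Fix $(z,t)$. Assume: (i) there is $L<\infty$ with $\|f^\star(z',p,t')-f^\star(z',p',t')\|\le L\|p-p'\|$ for all $z',t'$ and $p,p'\in\mathcal P$; (ii) $\hat f(z,p,t)=\hat f(z,p_{i(p)},t)$ for all $p\in\mathcal P$; (iii) for each anchor we observe $y_{ij}=f^\star(z,p_i,t)+\varepsilon_{ij}$, $j=1,\dots,n_i$, with $\varepsilon_{ij}\in\mathbb R^m$ independent, mean-zero, and coordinate-wise $\sigma_i$-sub-Gaussian, and $\hat f(z,p_i,t)=\frac1{n_i}\sum_j y_{ij}$. Let $n_{\min}=\min_i n_i$ and $\sigma_{\max}=\max_i\sigma_i$. Then for any $\delta\in(0,1)$, with probability at least $1-\delta$, $$\sup_{p\in\mathcal P}\|\hat f(z,p,t)-f^\star(z,p,t)\|_2\le\sigma_{\max}\sqrt{\frac{2m\log(2mK/\delta)}{n_{\min}}}+Lh_K.$$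
   Context: A real random variable $X$ is $\sigma$-sub-Gaussian if $\mathbb E[e^{\lambda X}]\le e^{\sigma^2\lambda^2/2}$ for all $\lambda\in\mathbb R$. In (i) the norm on the left is the Euclidean norm on $\mathbb R^m$. *)

theory Defs
  imports "HOL-Probability.Probability"
begin

definition sub_gaussian :: "'w measure \<Rightarrow> real \<Rightarrow> ('w \<Rightarrow> real) \<Rightarrow> bool" where
  "sub_gaussian M \<sigma> X \<longleftrightarrow>
     (\<forall>l::real. (\<integral>\<^sup>+ \<omega>. ennreal (exp (l * X \<omega>)) \<partial>M) \<le> ennreal (exp (\<sigma>\<^sup>2 * l\<^sup>2 / 2)))"

definition fill_distance :: "'a::metric_space set \<Rightarrow> nat \<Rightarrow> (nat \<Rightarrow> 'a) \<Rightarrow> real" where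
  "fill_distance P K pa = (SUP p\<in>P. Min ((\<lambda>i. dist p (pa i)) ` {..<K}))"

end

theory Submission imports Defs begin

lemma (in prob_space) subg_chernoff:
  fixes X :: "'i \<Rightarrow> 'a \<Rightarrow> real"
  assumes fin: "finite I" and ind: "indep_vars (\<lambda>_. borel) X I"
    and sg: "\<And>i. i \<in> I \<Longrightarrow> sub_gaussian M s (X i)" and l: "l > 0"
  shows "prob {x\<in>space M. (\<Sum>i\<in>I. X i x) \<ge> b} \<le> exp (-l*b) * exp (real (card I) * (s\<^sup>2 * l\<^sup>2 / 2))"
proof -
  have rv[measurable]: "X i \<in> borel_measurable M" if "i \<in> I" for i
    using ind that unfolding indep_vars_def by blast
  have "ennreal (prob {x\<in>space M. (\<Sum>i\<in>I. X i x) \<ge> b}) = emeasure M {x\<in>space M. (\<Sum>i\<in>I. X i x) \<ge> b}"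
    by (simp add: emeasure_eq_measure)
  also have "\<dots> \<le> ennreal (exp (-l*b)) * (\<integral>\<^sup>+x. ennreal (exp (l * (\<Sum>i\<in>I. X i x))) * indicator (space M) x \<partial>M)"
    by (intro Chernoff_ineq_nn_integral_ge l) auto
  also have "(\<integral>\<^sup>+x. ennreal (exp (l * (\<Sum>i\<in>I. X i x))) * indicator (space M) x \<partial>M) =
             (\<integral>\<^sup>+x. (\<Prod>i\<in>I. ennreal (exp (l * X i x))) \<partial>M)"
    by (intro nn_integral_cong)
       (simp_all add: sum_distrib_left exp_sum fin prod_ennreal)
  also have "\<dots> = (\<Prod>i\<in>I. \<integral>\<^sup>+x. ennreal (exp (l * X i x)) \<partial>M)"
    by (intro indep_vars_nn_integral fin indep_vars_compose2[OF ind]) auto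
  also have "ennreal (exp (-l * b)) * \<dots> \<le>
               ennreal (exp (-l * b)) * (\<Prod>i\<in>I. ennreal (exp (s\<^sup>2 * l\<^sup>2 / 2)))"
  proof (intro mult_left_mono prod_mono_ennreal)
    fix i assume i: "i \<in> I"
    show "(\<integral>\<^sup>+x. ennreal (exp (l * X i x)) \<partial>M) \<le> ennreal (exp (s\<^sup>2 * l\<^sup>2 / 2))"
      using sg[OF i] unfolding sub_gaussian_def by blast
  qed auto
  also have "\<dots> = ennreal (exp (-l*b) * exp (real (card I) * (s\<^sup>2 * l\<^sup>2 / 2)))"
  proof -
    have "ennreal (exp (s\<^sup>2 * l\<^sup>2 / 2)) ^ card I = ennreal (exp (s\<^sup>2 * l\<^sup>2 / 2) ^ card I)"
      by (simp add: ennreal_power)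
    also have "exp (s\<^sup>2 * l\<^sup>2 / 2) ^ card I = exp (real (card I) * (s\<^sup>2 * l\<^sup>2 / 2))"
      by (metis exp_of_nat_mult)
    finally show ?thesis by (simp add: ennreal_mult')
  qed
  finally show ?thesis
    by (subst (asm) ennreal_le_iff) simp_all
qed

lemma (in prob_space) subg_tail_pos:
  fixes X :: "'i \<Rightarrow> 'a \<Rightarrow> real"
  assumes fin: "finite I" and ind: "indep_vars (\<lambda>_. borel) X I"
    and sg: "\<And>i. i \<in> I \<Longrightarrow> sub_gaussian M s (X i)" and s: "s > 0" and a: "a \<ge> 0"
    and N: "card I > 0"
  shows "prob {x\<in>space M. (\<Sum>i\<in>I. X i x) > a} \<le> exp (-(a\<^sup>2 / (2 * real (card I) * s\<^sup>2)))"
proof (cases "a = 0")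
  case True
  then show ?thesis by simp
next
  case False
  have rv[measurable]: "X i \<in> borel_measurable M" if "i \<in> I" for i
    using ind that unfolding indep_vars_def by blast
  define N where "N = real (card I)"
  have Np: "N > 0" using N by (simp add: N_def)
  define l where "l = a / (N * s\<^sup>2)"
  have l: "l > 0" using False a Np s by (simp add: l_def)
  have "prob {x\<in>space M. (\<Sum>i\<in>I. X i x) > a} \<le> prob {x\<in>space M. (\<Sum>i\<in>I. X i x) \<ge> a}"
    by (intro finite_measure_mono) auto
  also have "\<dots> \<le> exp (-l*a) * exp (N * (s\<^sup>2 * l\<^sup>2 / 2))"
    unfolding N_def by (rule subg_chernoff[OF fin ind sg l])
  also have "\<dots> = exp (-l*a + N * (s\<^sup>2 * l\<^sup>2 / 2))" by (rule exp_add[symmetric])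
  also have "-l*a + N * (s\<^sup>2 * l\<^sup>2 / 2) = -(a\<^sup>2 / (2 * N * s\<^sup>2))"
    using Np s by (simp add: l_def field_simps power2_eq_square)
  finally show ?thesis by (simp add: N_def)
qed

lemma (in prob_space) subg_tail_zero:
  fixes X :: "'i \<Rightarrow> 'a \<Rightarrow> real"
  assumes fin: "finite I" and ind: "indep_vars (\<lambda>_. borel) X I"
    and sg: "\<And>i. i \<in> I \<Longrightarrow> sub_gaussian M 0 (X i)" and a: "a \<ge> 0"
  shows "prob {x\<in>space M. (\<Sum>i\<in>I. X i x) > a} = 0"
proof -
  have rv[measurable]: "X i \<in> borel_measurable M" if "i \<in> I" for i
    using ind that unfolding indep_vars_def by blast
  have ge0: "prob {x\<in>space M. (\<Sum>i\<in>I. X i x) \<ge> b} = 0" if b: "b > 0" for b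
  proof (rule ccontr)
    let ?p = "prob {x\<in>space M. (\<Sum>i\<in>I. X i x) \<ge> b}"
    assume "?p \<noteq> 0"
    then have p: "?p > 0" using measure_nonneg[of M "{x\<in>space M. (\<Sum>i\<in>I. X i x) \<ge> b}"] by (metis less_le)
    define l where "l = (\<bar>ln ?p\<bar> + 1) / b"
    have l: "l > 0" using b by (simp add: l_def add_pos_nonneg)
    have "?p \<le> exp (-l*b) * exp (real (card I) * (0\<^sup>2 * l\<^sup>2 / 2))"
      by (rule subg_chernoff[OF fin ind sg l])
    also have "\<dots> = exp (-(\<bar>ln ?p\<bar> + 1))" using b by (simp add: l_def)
    also have "\<dots> < exp (ln ?p)" by simp
    also have "\<dots> = ?p" using p by simp
    finally show False by simp
  qed
  let ?N = "\<lambda>k::nat. {x\<in>space M. (\<Sum>i\<in>I. X i x) \<ge> 1 / Suc k}"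
  have "?N k \<in> null_sets M" for k
    using ge0[of "1 / Suc k"] by (auto simp: null_sets_def emeasure_eq_measure)
  then have U: "(\<Union>k. ?N k) \<in> null_sets M" by (rule null_sets_UN)
  have sub: "{x\<in>space M. (\<Sum>i\<in>I. X i x) > a} \<subseteq> (\<Union>k. ?N k)"
  proof
    fix x assume x: "x \<in> {x\<in>space M. (\<Sum>i\<in>I. X i x) > a}"
    then have "(\<Sum>i\<in>I. X i x) > 0" using a by simp
    then obtain k where "inverse (real (Suc k)) < (\<Sum>i\<in>I. X i x)"
      by (rule reals_Archimedean[THEN exE])
    then have "1 / real (Suc k) < (\<Sum>i\<in>I. X i x)" by (simp add: inverse_eq_divide)
    then have "x \<in> ?N k" using x by simp
    then show "x \<in> (\<Union>k. ?N k)" by (rule UN_I[OF UNIV_I])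
  qed
  have "prob {x\<in>space M. (\<Sum>i\<in>I. X i x) > a} \<le> prob (\<Union>k. ?N k)"
    using U sub by (intro finite_measure_mono) (auto simp: null_sets_def)
  also have "\<dots> = 0" using U by (simp add: null_sets_def emeasure_eq_measure)
  finally show ?thesis using measure_nonneg[of M "{x\<in>space M. (\<Sum>i\<in>I. X i x) > a}"] by linarith
qed

lemma vec_nth_measurable: "(\<lambda>v::real^'m. c * v $ k) \<in> borel_measurable borel"
  by (rule borel_measurable_continuous_onI, rule continuous_on_mult, rule continuous_on_const,
      rule linear_continuous_on, rule bounded_linear_vec_nth)

lemma norm_cart_le:
  fixes v :: "real ^ 'm"
  assumes "\<And>k. \<bar>v $ k\<bar> \<le> r"
  shows "norm v \<le> sqrt (real CARD('m)) * r"
proof -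
  have r: "r \<ge> 0" using abs_ge_zero[of "v $ undefined"] assms[of undefined] by linarith
  have "norm v = sqrt (\<Sum>k\<in>UNIV. (v $ k)\<^sup>2)"
    by (simp add: norm_vec_def L2_set_def)
  also have "\<dots> \<le> sqrt (\<Sum>k\<in>(UNIV::'m set). r\<^sup>2)"
  proof (intro real_sqrt_le_mono sum_mono)
    fix k
    have "\<bar>v $ k\<bar>\<^sup>2 \<le> r\<^sup>2" by (rule power_mono[OF assms[of k] abs_ge_zero])
    then show "(v $ k)\<^sup>2 \<le> r\<^sup>2" by (simp only: power2_abs)
  qed
  also have "(\<Sum>k\<in>(UNIV::'m set). r\<^sup>2) = real CARD('m) * r\<^sup>2" by simp
  also have "sqrt (real CARD('m) * r\<^sup>2) = sqrt (real CARD('m)) * sqrt (r\<^sup>2)" by (rule real_sqrt_mult)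
  also have "sqrt (r\<^sup>2) = r" using r by simp
  finally show ?thesis by simp
qed
theorem theoremA6:
  fixes M :: "'w measure"
    and P :: "(real ^ 'd) set"
    and K :: nat
    and pa :: "nat \<Rightarrow> real ^ 'd"
    and idx :: "real ^ 'd \<Rightarrow> nat"
    and fstar :: "'z \<Rightarrow> real ^ 'd \<Rightarrow> 't \<Rightarrow> real ^ 'm"
    and fhat :: "'w \<Rightarrow> 'z \<Rightarrow> real ^ 'd \<Rightarrow> 't \<Rightarrow> real ^ 'm"
    and z :: 'z and t :: 't
    and L :: real
    and n :: "nat \<Rightarrow> nat"
    and \<sigma> :: "nat \<Rightarrow> real"
    and eps :: "nat \<Rightarrow> nat \<Rightarrow> 'w \<Rightarrow> real ^ 'm"
    and \<delta> :: real
  assumes M: "prob_space M"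
    and P_compact: "compact P"
    and K_pos: "K > 0"
    and anchors: "\<forall>i<K. pa i \<in> P"
    and idx: "\<forall>p\<in>P. idx p < K \<and> (\<forall>i<K. dist p (pa (idx p)) \<le> dist p (pa i))"
    and lipschitz: "\<forall>z' t'. \<forall>p\<in>P. \<forall>p'\<in>P.
                       norm (fstar z' p t' - fstar z' p' t') \<le> L * dist p p'"
    and piecewise_const: "\<forall>\<omega>\<in>space M. \<forall>p\<in>P. fhat \<omega> z p t = fhat \<omega> z (pa (idx p)) t"
    and n_pos: "\<forall>i<K. n i > 0"
    and sigma_nonneg: "\<forall>i<K. \<sigma> i \<ge> 0"
    and indep: "prob_space.indep_vars M (\<lambda>_. borel) (\<lambda>(i, j). eps i j) {(i, j). i < K \<and> j < n i}"
    and mean_zero: "\<forall>i<K. \<forall>j<n i. integrable M (eps i j) \<and> prob_space.expectation M (eps i j) = 0"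
    and subg: "\<forall>i<K. \<forall>j<n i. \<forall>k. sub_gaussian M (\<sigma> i) (\<lambda>\<omega>. eps i j \<omega> $ k)"
    and estimator: "\<forall>\<omega>\<in>space M. \<forall>i<K.
         fhat \<omega> z (pa i) t = (1 / real (n i)) *\<^sub>R (\<Sum>j<n i. fstar z (pa i) t + eps i j \<omega>)"
    and delta: "0 < \<delta>" "\<delta> < 1"
  shows "\<exists>A\<in>prob_space.events M. prob_space.prob M A \<ge> 1 - \<delta> \<and>
           (\<forall>\<omega>\<in>A. (SUP p\<in>P. norm (fhat \<omega> z p t - fstar z p t))
              \<le> Max (\<sigma> ` {..<K}) *
                  sqrt (2 * real CARD('m) * ln (2 * real CARD('m) * real K / \<delta>)
                        / real (Min (n ` {..<K})))
                + L * fill_distance P K pa)"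
proof -
  interpret prob_space M by (rule M)
  define m where "m = real CARD('m)"
  define s where "s = Max (\<sigma> ` {..<K})"
  define nm where "nm = real (Min (n ` {..<K}))"
  define c where "c = 2 * m * real K / \<delta>"
  define r where "r = s * sqrt (2 * ln c / nm)"
  have Kne: "{..<K} \<noteq> {}" using K_pos by auto
  have sig_le: "\<sigma> i \<le> s" if "i < K" for i
    unfolding s_def using that by (intro Max_ge) auto
  have s0: "s \<ge> 0" using sig_le[OF K_pos] sigma_nonneg K_pos by force
  have nm_le: "nm \<le> real (n i)" if "i < K" for i
    unfolding nm_def using that by (simp add: Min_le)
  have nm_pos: "nm > 0"
  proof -
    have "Min (n ` {..<K}) \<in> n ` {..<K}" using Kne by (intro Min_in) auto
    then show ?thesis using n_pos unfolding nm_def by auto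
  qed
  have m1: "m \<ge> 1" unfolding m_def by simp
  have c1: "c > 1"
  proof -
    have K1: "real K \<ge> 1" using K_pos by simp
    have "1 * 1 \<le> m * real K" by (rule mult_mono) (use m1 K1 in auto)
    then have "2 * m * real K \<ge> 2" by simp
    then show ?thesis using delta unfolding c_def by (simp add: field_simps)
  qed
  have lnc: "ln c > 0" using c1 by simp
  have r0: "r \<ge> 0" unfolding r_def using s0 lnc nm_pos by simp
  define S where "S i k \<omega> = (\<Sum>j<n i. eps i j \<omega> $ k)" for i k \<omega>
  define Q where "Q = {..<K} \<times> (UNIV::'m set) \<times> {1::real, -1}"
  define B where "B = (\<lambda>(i, k, a). {\<omega>\<in>space M. a * S i k \<omega> > real (n i) * r})"
  define A where "A = space M - (\<Union>q\<in>Q. B q)"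
  have finQ: "finite Q" unfolding Q_def by simp
  have cardQ: "real (card Q) = 2 * m * real K"
    unfolding Q_def m_def by (simp add: card_cartesian_product)
  have rv: "eps i j \<in> borel_measurable M" if "i < K" "j < n i" for i j
    using indep that unfolding indep_vars_def by auto
  have Bsets: "B q \<in> events" if "q \<in> Q" for q
  proof -
    obtain i k a where q: "q = (i, k, a)" and i: "i < K" using \<open>q \<in> Q\<close> unfolding Q_def by auto
    have [measurable]: "(\<lambda>\<omega>. a * S i k \<omega>) \<in> borel_measurable M"
      unfolding S_def sum_distrib_left
      by (intro borel_measurable_sum measurable_compose[OF rv vec_nth_measurable]) (use i in auto)
    show ?thesis unfolding q B_def by simp
  qed
  have Bprob: "prob (B q) \<le> \<delta> / (2 * m * real K)" if "q \<in> Q" for q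
  proof -
    obtain i k a where q: "q = (i, k, a)" and i: "i < K" and a: "a = 1 \<or> a = -1"
      using \<open>q \<in> Q\<close> unfolding Q_def by auto
    define I where "I = Pair i ` {..<n i}"
    define X where "X = (\<lambda>q \<omega>. (\<lambda>v. a * v $ k) ((\<lambda>(i, j). eps i j) q \<omega>))"
    have finI: "finite I" unfolding I_def by simp
    have cardI: "card I = n i" unfolding I_def by (simp add: card_image inj_on_def)
    have IQ: "I \<subseteq> {(i, j). i < K \<and> j < n i}" unfolding I_def using i by auto
    have indX: "indep_vars (\<lambda>_. borel) X I"
    proof -
      have "indep_vars (\<lambda>_. borel) (\<lambda>q \<omega>. (\<lambda>v. a * v $ k) ((\<lambda>(i, j). eps i j) q \<omega>)) {(i, j). i < K \<and> j < n i}"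
        by (rule indep_vars_compose2[OF indep]) (rule vec_nth_measurable)
      then show ?thesis unfolding X_def by (rule indep_vars_subset[OF _ IQ])
    qed
    have sgX: "sub_gaussian M (\<sigma> i) (X q')" if "q' \<in> I" for q'
    proof -
      from that obtain j where j: "j < n i" and q': "q' = (i, j)" unfolding I_def by auto
      have sg: "sub_gaussian M (\<sigma> i) (\<lambda>\<omega>. eps i j \<omega> $ k)" using subg i j by blast
      show ?thesis
        unfolding sub_gaussian_def
      proof
        fix l
        show "(\<integral>\<^sup>+ \<omega>. ennreal (exp (l * X q' \<omega>)) \<partial>M) \<le> ennreal (exp ((\<sigma> i)\<^sup>2 * l\<^sup>2 / 2))"
          using a
        proof
          assume "a = 1" then show ?thesis
            using sg unfolding sub_gaussian_def X_def q' by simp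
        next
          assume "a = -1" then show ?thesis
            using sg unfolding sub_gaussian_def X_def q' by (auto elim!: allE[of _ "-l"])
        qed
      qed
    qed
    have sgXs: "sub_gaussian M s (X q')" if "q' \<in> I" for q'
    proof -
      have "(\<sigma> i)\<^sup>2 \<le> s\<^sup>2" using sig_le[OF i] sigma_nonneg i by (intro power_mono) auto
      have "exp ((\<sigma> i)\<^sup>2 * l\<^sup>2 / 2) \<le> exp (s\<^sup>2 * l\<^sup>2 / 2)" for l
        using \<open>(\<sigma> i)\<^sup>2 \<le> s\<^sup>2\<close> by (simp add: divide_right_mono mult_right_mono)
      then have "ennreal (exp ((\<sigma> i)\<^sup>2 * l\<^sup>2 / 2)) \<le> ennreal (exp (s\<^sup>2 * l\<^sup>2 / 2))" for l
        by (rule ennreal_leI)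
      then show ?thesis using sgX[OF that] unfolding sub_gaussian_def
        using order_trans by blast
    qed
    have Beq: "B q = {\<omega>\<in>space M. (\<Sum>q'\<in>I. X q' \<omega>) > real (n i) * r}"
    proof -
      have "(\<Sum>q'\<in>I. X q' \<omega>) = a * S i k \<omega>" for \<omega>
        unfolding I_def X_def S_def
        by (subst sum.reindex) (auto simp: inj_on_def sum_distrib_left)
      then show ?thesis unfolding q B_def by simp
    qed
    have nr0: "real (n i) * r \<ge> 0" using r0 by simp
    show ?thesis
    proof (cases "s = 0")
      case True
      have "\<sigma> i = 0" using sig_le[OF i] sigma_nonneg i True by force
      then have "prob (B q) = 0" unfolding Beq
        using subg_tail_zero[OF finI indX _ nr0] sgX by simp
      then show ?thesis using delta m1 K_pos by simp
    next
      case False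
      then have sp: "s > 0" using s0 by simp
      have np: "card I > 0" using cardI n_pos i by simp
      have "prob (B q) \<le> exp (-((real (n i) * r)\<^sup>2 / (2 * real (card I) * s\<^sup>2)))"
        unfolding Beq by (rule subg_tail_pos[OF finI indX sgXs sp nr0 np])
      also have "(real (n i) * r)\<^sup>2 / (2 * real (card I) * s\<^sup>2) = real (n i) * ln c / nm"
        using sp nm_pos lnc n_pos i unfolding cardI r_def
        by (simp add: power_mult_distrib field_simps power2_eq_square)
      also have "exp (- (real (n i) * ln c / nm)) \<le> exp (- ln c)"
        using nm_le[OF i] nm_pos lnc by (simp add: field_simps mult_right_mono)
      also have "exp (- ln c) = \<delta> / (2 * m * real K)"
        using c1 unfolding c_def by (simp add: exp_minus)
      finally show ?thesis .
    qed
  qed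
  have Uev: "(\<Union>q\<in>Q. B q) \<in> events" using Bsets finQ by auto
  have "prob (\<Union>q\<in>Q. B q) \<le> (\<Sum>q\<in>Q. prob (B q))"
    using Bsets finQ by (intro finite_measure_subadditive_finite) auto
  also have "\<dots> \<le> (\<Sum>q\<in>Q. \<delta> / (2 * m * real K))" using Bprob by (intro sum_mono) auto
  also have "\<dots> = \<delta>" using cardQ m1 K_pos by simp
  finally have Ubound: "prob (\<Union>q\<in>Q. B q) \<le> \<delta>" .
  have Aev: "A \<in> events" unfolding A_def using Uev by auto
  have probA: "prob A \<ge> 1 - \<delta>" unfolding A_def using prob_compl[OF Uev] Ubound by simp
  have Pne: "P \<noteq> {}" using anchors K_pos by auto
  obtain e where e: "\<forall>y\<in>P. dist (pa 0) y \<le> e"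
    using compact_imp_bounded[OF P_compact] bounded_any_center by blast
  define dm where "dm p = dist p (pa (idx p))" for p
  have Min_eq: "Min ((\<lambda>i. dist p (pa i)) ` {..<K}) = dm p" if "p \<in> P" for p
    unfolding dm_def using idx that by (intro Min_eqI) auto
  have dm_le: "dm p \<le> 2 * e" if "p \<in> P" for p
  proof -
    have "idx p < K" using idx that by auto
    then have "pa (idx p) \<in> P" using anchors by auto
    then show ?thesis unfolding dm_def using e that dist_triangle3[of p "pa (idx p)" "pa 0"]
      by (metis dist_commute add_mono mult_2 order_trans)
  qed
  have hK: "fill_distance P K pa = (SUP p\<in>P. dm p)"
    unfolding fill_distance_def using Min_eq by (intro SUP_cong) auto
  have bdd: "bdd_above (dm ` P)" using dm_le by (intro bdd_aboveI2) auto
  have Ldm: "L * dm p \<le> L * fill_distance P K pa" if "p \<in> P" for p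
  proof (cases "L \<ge> 0")
    case True
    then show ?thesis unfolding hK using that bdd by (intro mult_left_mono cSUP_upper) auto
  next
    case False
    have dm0: "dm p' = 0" if "p' \<in> P" for p'
    proof -
      have "idx p' < K" using idx that by auto
      then have "pa (idx p') \<in> P" using anchors by auto
      then have "0 \<le> L * dist p' (pa (idx p'))" using lipschitz that
        by (meson norm_ge_zero order_trans)
      then show ?thesis using False unfolding dm_def
        by (simp add: zero_le_mult_iff)
    qed
    have "(SUP p\<in>P. dm p) = 0" using dm0 Pne by (simp add: cSUP_const)
    then show ?thesis unfolding hK using dm0[OF that] by simp
  qed
  have sqr: "sqrt m * r = Max (\<sigma> ` {..<K}) *
                  sqrt (2 * real CARD('m) * ln (2 * real CARD('m) * real K / \<delta>)
                        / real (Min (n ` {..<K})))"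
    unfolding r_def s_def c_def nm_def m_def
    by (simp add: real_sqrt_mult[symmetric] mult_ac)
  show ?thesis
  proof (intro bexI[OF _ Aev] conjI probA ballI)
    fix \<omega> assume w: "\<omega> \<in> A"
    then have ws: "\<omega> \<in> space M" and wB: "\<And>q. q \<in> Q \<Longrightarrow> \<omega> \<notin> B q" unfolding A_def by auto
    have anchor: "norm (fhat \<omega> z (pa i) t - fstar z (pa i) t) \<le> sqrt m * r" if i: "i < K" for i
    proof -
      have npos: "real (n i) > 0" using n_pos i by simp
      have diff: "fhat \<omega> z (pa i) t - fstar z (pa i) t = (1 / real (n i)) *\<^sub>R (\<Sum>j<n i. eps i j \<omega>)"
      proof -
        have "(\<Sum>j<n i. fstar z (pa i) t + eps i j \<omega>) = real (n i) *\<^sub>R fstar z (pa i) t + (\<Sum>j<n i. eps i j \<omega>)"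
          by (simp only: sum.distrib sum_constant_scaleR card_lessThan)
        then show ?thesis using estimator ws i npos by (simp add: scaleR_add_right)
      qed
      show ?thesis unfolding diff m_def
      proof (rule norm_cart_le)
        fix k
        have "\<omega> \<notin> B (i, k, 1)" "\<omega> \<notin> B (i, k, -1)" using wB i unfolding Q_def by auto
        then have "\<bar>S i k \<omega>\<bar> \<le> real (n i) * r" using ws unfolding B_def by auto
        then have "\<bar>S i k \<omega>\<bar> / real (n i) \<le> r" using npos by (simp add: field_simps)
        then show "\<bar>((1 / real (n i)) *\<^sub>R (\<Sum>j<n i. eps i j \<omega>)) $ k\<bar> \<le> r"
          unfolding S_def by (simp add: sum_component)
      qed
    qed
    have "norm (fhat \<omega> z p t - fstar z p t) \<le> sqrt m * r + L * fill_distance P K pa" if p: "p \<in> P" for p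
    proof -
      have ip: "idx p < K" using idx p by auto
      then have qP: "pa (idx p) \<in> P" using anchors by auto
      have "fhat \<omega> z p t - fstar z p t = (fhat \<omega> z (pa (idx p)) t - fstar z (pa (idx p)) t)
              + (fstar z (pa (idx p)) t - fstar z p t)"
        using piecewise_const ws p by simp
      then have "norm (fhat \<omega> z p t - fstar z p t) \<le> norm (fhat \<omega> z (pa (idx p)) t - fstar z (pa (idx p)) t)
              + norm (fstar z (pa (idx p)) t - fstar z p t)"
        by (metis norm_triangle_ineq)
      also have "\<dots> \<le> sqrt m * r + L * dm p"
        using anchor[OF ip] lipschitz qP p unfolding dm_def
        by (intro add_mono) (auto simp: dist_commute, metis dist_commute)
      also have "\<dots> \<le> sqrt m * r + L * fill_distance P K pa" using Ldm[OF p] by simp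
      finally show ?thesis .
    qed
    then show "(SUP p\<in>P. norm (fhat \<omega> z p t - fstar z p t))
              \<le> Max (\<sigma> ` {..<K}) *
                  sqrt (2 * real CARD('m) * ln (2 * real CARD('m) * real K / \<delta>)
                        / real (Min (n ` {..<K})))
                + L * fill_distance P K pa"
      unfolding sqr[symmetric] using Pne by (intro cSUP_least) auto
  qed
qed

end
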